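(* Let $a\ge b\ge 2$ be integers and $A=\begin{pmatrix}0&a&-2\\-a&0&b\\2&-b&0\end{pmatrix}$. Then $A$ is mutation-cyclic if and only if $a=b$.
   Context: Matrix mutation: $\mu_k(B)=(b'_{ij})$ with $b'_{ij}=-b_{ij}$ if $i=k$ or $j=k$, $b'_{ij}=b_{ij}+\operatorname{sgn}(b_{ik})\max(b_{ik}b_{kj},0)$ otherwise. A $3\times3$ skew-symmetric matrix is cyclic if its quiver ($b_{ij}$ arrows $i\to j$ when $b_{ij}>0$) contains an oriented cycle; it is mutation-cyclic if every matrix obtained from it by a finite sequence of mutations is cyclic. *)

theory Defs
  imports Main
begin

(* 3x3 integer matrices represented as functions on indices; only the entries
   with indices in {0,1,2} are relevant (vertices of the quiver are 0,1,2). *)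
type_synonym mat3 = "nat \<Rightarrow> nat \<Rightarrow> int"

definition idx3 :: "nat set" where "idx3 = {0, 1, 2}"

definition mutate :: "nat \<Rightarrow> mat3 \<Rightarrow> mat3" where
  "mutate k B = (\<lambda>i j. if i = k \<or> j = k then - B i j
                        else B i j + sgn (B i k) * max (B i k * B k j) 0)"

definition arrows3 :: "mat3 \<Rightarrow> (nat \<times> nat) set" where
  "arrows3 B = {(i, j). i \<in> idx3 \<and> j \<in> idx3 \<and> B i j > 0}"

definition cyclic3 :: "mat3 \<Rightarrow> bool" where
  "cyclic3 B \<longleftrightarrow> (\<exists>i. (i, i) \<in> (arrows3 B)\<^sup>+)"

definition mutation_class3 :: "mat3 \<Rightarrow> mat3 set" where
  "mutation_class3 B = {foldr mutate ks B | ks. set ks \<subseteq> idx3}"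

definition mutation_cyclic3 :: "mat3 \<Rightarrow> bool" where
  "mutation_cyclic3 B \<longleftrightarrow> (\<forall>B' \<in> mutation_class3 B. cyclic3 B')"

definition matA :: "int \<Rightarrow> int \<Rightarrow> mat3" where
  "matA a b = (\<lambda>i j.
     if i = 0 \<and> j = 1 then a else if i = 0 \<and> j = 2 then -2
     else if i = 1 \<and> j = 0 then -a else if i = 1 \<and> j = 2 then b
     else if i = 2 \<and> j = 0 then 2 else if i = 2 \<and> j = 1 then -b
     else 0)"

end

theory Submission imports Defs begin

definition mk :: "int \<Rightarrow> int \<Rightarrow> int \<Rightarrow> int" where
 "mk p q r = p*p + q*q + r*r - p*q*r"

lemma L1:
  fixes p q r :: int
  assumes "2 \<le> p" "2 \<le> q" "2 \<le> r" "mk p q r = 4"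
  shows "p*q - r \<ge> 2"
proof -
  have e: "r * (p*q - r) = p*p + q*q - 4" using assms(4) unfolding mk_def by (simp add: algebra_simps)
  have "p*p \<ge> 4" using mult_mono[OF assms(1) assms(1)] assms by simp
  moreover have "q*q \<ge> 4" using mult_mono[OF assms(2) assms(2)] assms by simp
  ultimately have "r * (p*q - r) > 0" using e by linarith
  hence pos: "p*q - r > 0" using assms(3) by (simp add: zero_less_mult_iff)
  show ?thesis
  proof (rule ccontr)
    assume "\<not> ?thesis"
    hence "p*q - r = 1" using pos by linarith
    hence "r = p*q - 1" "r = p*p + q*q - 4" using e by auto
    hence "p*p + q*q - p*q = 3" by linarith
    moreover have "(p-q)*(p-q) \<ge> 0" by simp
    moreover have "p*q \<ge> 4" using mult_mono[OF assms(1) assms(2)] assms by simp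
    ultimately show False by (simp add: algebra_simps)
  qed
qed

lemma L2a:
  fixes p q r :: int
  assumes "2 \<le> p" "p \<le> q" "q \<le> r" "2*r \<le> p*q"
  shows "mk p q r \<le> 4"
proof -
  have h1: "(r-q)*(2*r-p*q) \<le> 0" using assms by (intro mult_nonneg_nonpos) auto
  have h2: "q*r*(p-2) \<ge> q*q*(p-2)" using assms by (intro mult_right_mono mult_left_mono) auto
  have h3: "q*q*(p-2) \<ge> p*p*(p-2)" using assms by (intro mult_right_mono mult_mono) auto
  have h4: "p*p*(3-p) \<le> 4"
  proof (cases "p = 2")
    case False
    hence "3 - p \<le> 0" using assms by simp
    moreover have "p*p \<ge> 0" by simp
    ultimately show ?thesis by (smt (verit) mult_nonneg_nonpos)
  qed simp
  have "2 * mk p q r \<le> 8" using h1 h2 h3 h4 unfolding mk_def by (simp add: algebra_simps)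
  thus ?thesis by simp
qed

lemma L2:
  fixes p q r :: int
  assumes "2 \<le> p" "2 \<le> q" "p \<le> r" "q \<le> r" "2*r \<le> p*q"
  shows "mk p q r \<le> 4"
proof (cases "p \<le> q")
  case True then show ?thesis using L2a assms by auto
next
  case False
  have "mk q p r \<le> 4" using L2a[of q p r] assms False by (auto simp: mult.commute)
  thus ?thesis unfolding mk_def by (simp add: algebra_simps)
qed

definition tri :: "nat \<Rightarrow> nat \<Rightarrow> nat \<Rightarrow> int \<Rightarrow> int \<Rightarrow> int \<Rightarrow> mat3" where
"tri x y z p q r = (\<lambda>i j. if i=x \<and> j=y then p else if i=y \<and> j=x then -p
   else if i=y \<and> j=z then q else if i=z \<and> j=y then -q
   else if i=z \<and> j=x then r else if i=x \<and> j=z then -r else 0)"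

definition V :: "nat \<Rightarrow> nat \<Rightarrow> nat \<Rightarrow> bool" where
 "V x y z \<longleftrightarrow> distinct [x,y,z] \<and> x \<in> idx3 \<and> y \<in> idx3 \<and> z \<in> idx3"

lemma V_rot: "V x y z \<Longrightarrow> V y z x" by (auto simp: V_def)

lemma tri_rot: "V x y z \<Longrightarrow> tri x y z p q r = tri y z x q r p"
  by (auto simp: V_def tri_def fun_eq_iff)

lemma matA_tri: "matA a b = tri 0 1 2 a b 2"
  by (auto simp: matA_def tri_def fun_eq_iff)

lemma tri_mut: assumes "V x y z" "p > 0" "q > 0"
  shows "mutate y (tri x y z p q r) = tri x z y (p*q - r) q p"
  using assms by (auto simp: V_def tri_def mutate_def fun_eq_iff sgn_if mult_less_0_iff)

lemma tri_cyc: assumes "V x y z" "p > 0" "q > 0" "r > 0"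
  shows "cyclic3 (tri x y z p q r)"
proof -
  have "(x,y) \<in> arrows3 (tri x y z p q r)" "(y,z) \<in> arrows3 (tri x y z p q r)"
     "(z,x) \<in> arrows3 (tri x y z p q r)"
    using assms by (auto simp: V_def tri_def arrows3_def)
  hence "(x,x) \<in> (arrows3 (tri x y z p q r))\<^sup>+" by (meson trancl.simps)
  thus ?thesis unfolding cyclic3_def by blast
qed

lemma tri_acyc: assumes "V x y z" "p > 0" "q > 0" "r \<le> 0"
  shows "\<not> cyclic3 (tri x y z p q r)"
proof -
  define rk where "rk i = (if i = x then 0 else if i = y then 1 else (2::nat))" for i
  let ?s = "{(i,j). rk i < rk j}"
  have "arrows3 (tri x y z p q r) \<subseteq> ?s"
    using assms by (auto simp: V_def tri_def arrows3_def rk_def split: if_splits)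
  hence "(arrows3 (tri x y z p q r))\<^sup>+ \<subseteq> ?s\<^sup>+" by (meson subsetI trancl_mono)
  also have "?s\<^sup>+ = ?s" by (rule trancl_id) (auto simp: trans_def)
  finally show ?thesis unfolding cyclic3_def by auto
qed

lemma foldr_snoc: "foldr mutate (ks @ [k]) B = foldr mutate ks (mutate k B)" by simp

lemma one_case: assumes "V x y z" "p > 0" "q > 0"
  shows "\<exists>ks. set ks \<subseteq> idx3 \<and> \<not> cyclic3 (foldr mutate ks (tri x y z p q 1))"
proof (cases "q \<le> p")
  case True
  have Vy: "V y z x" using assms V_rot by blast
  have "tri x y z p q 1 = tri y z x q 1 p" using tri_rot assms by blast
  hence "mutate z (tri x y z p q 1) = tri y x z (q - p) 1 q" using tri_mut[OF Vy, of q 1 p] assms by simp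
  also have "\<dots> = tri x z y 1 q (q - p)" using tri_rot assms by (auto simp: V_def)
  finally have "\<not> cyclic3 (foldr mutate [z] (tri x y z p q 1))" using tri_acyc[of x z y 1 q "q-p"] assms True
    by (auto simp: V_def)
  moreover have "set [z] \<subseteq> idx3" using assms by (auto simp: V_def)
  ultimately show ?thesis by blast
next
  case False
  have Vz: "V z x y" using assms V_rot by blast
  have "tri x y z p q 1 = tri z x y 1 p q" using tri_rot assms V_rot by metis
  hence "mutate x (tri x y z p q 1) = tri z y x (p - q) p 1" using tri_mut[OF Vz, of 1 p q] assms by simp
  also have "\<dots> = tri y x z p 1 (p - q)" using tri_rot assms by (auto simp: V_def)
  finally have "\<not> cyclic3 (foldr mutate [x] (tri x y z p q 1))" using tri_acyc[of y x z p 1 "p-q"] assms False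
    by (auto simp: V_def)
  moreover have "set [x] \<subseteq> idx3" using assms by (auto simp: V_def)
  ultimately show ?thesis by blast
qed

definition Good where
 "Good x y z p q r \<longleftrightarrow> (\<exists>ks. set ks \<subseteq> idx3 \<and> \<not> cyclic3 (foldr mutate ks (tri x y z p q r)))"

lemma mk_rot: "mk q r p = mk p q r" unfolding mk_def by (simp add: algebra_simps)
lemma mk_mut: "mk (p*q - r) q p = mk p q r" unfolding mk_def by (simp add: algebra_simps)

lemma Good_snoc: assumes "y \<in> idx3" "Good x' y' z' p' q' r'"
  "mutate y (tri x y z p q r) = tri x' y' z' p' q' r'"
  shows "Good x y z p q r"
proof -
  obtain ks where "set ks \<subseteq> idx3" "\<not> cyclic3 (foldr mutate ks (tri x' y' z' p' q' r'))"
    using assms(2) Good_def by blast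
  hence "set (ks @ [y]) \<subseteq> idx3" "\<not> cyclic3 (foldr mutate (ks @ [y]) (tri x y z p q r))"
    using assms by auto
  thus ?thesis unfolding Good_def by blast
qed

lemma step:
  assumes IH: "\<And>x y z p q r. V x y z \<Longrightarrow> 2\<le>p \<Longrightarrow> 2\<le>q \<Longrightarrow> 2\<le>r \<Longrightarrow> mk p q r > 4
      \<Longrightarrow> p+q+r < S \<Longrightarrow> Good x y z p q r"
    and V: "V x y z" and h: "2\<le>p" "2\<le>q" "2\<le>r" "p\<le>r" "q\<le>r" "mk p q r > 4" "p+q+r = S"
  shows "Good x y z p q r"
proof -
  have M: "mutate y (tri x y z p q r) = tri x z y (p*q - r) q p" using tri_mut V h by auto
  have y: "y \<in> idx3" using V V_def by auto
  have Vxzy: "V x z y" using V by (auto simp: V_def)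
  consider "p*q - r \<le> 0" | "p*q - r = 1" | "p*q - r \<ge> 2" by linarith
  then show ?thesis
  proof cases
    case 1
    have "tri x z y (p*q - r) q p = tri z y x q p (p*q - r)" using tri_rot Vxzy by blast
    moreover have "\<not> cyclic3 (foldr mutate [] (tri z y x q p (p*q - r)))"
      using tri_acyc[of z y x q p] Vxzy 1 h by (auto simp: V_def)
    ultimately have "Good x z y (p*q - r) q p" unfolding Good_def
      by (intro exI[of _ "[]"]) simp
    thus ?thesis using Good_snoc[OF y _ M] by blast
  next
    case 2
    have T: "tri x z y (p*q - r) q p = tri z y x q p 1" using tri_rot Vxzy 2 by metis
    have G: "Good z y x q p 1" unfolding Good_def
      by (rule one_case) (use Vxzy h in \<open>auto simp: V_def\<close>)
    have "Good x z y (p*q - r) q p" unfolding Good_def T using G unfolding Good_def .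
    thus ?thesis using Good_snoc[OF y _ M] by blast
  next
    case 3
    have "p*q - r < r"
    proof (rule ccontr)
      assume "\<not> ?thesis"
      hence "mk p q r \<le> 4" using L2[of p q r] h by linarith
      thus False using h by linarith
    qed
    hence "Good x z y (p*q - r) q p" using IH[OF Vxzy 3 h(2) h(1)] h mk_mut[of p q r] by linarith
    thus ?thesis using Good_snoc[OF y _ M] by blast
  qed
qed

lemma descent:
  "\<forall>x y z p q r. V x y z \<and> 2\<le>p \<and> 2\<le>q \<and> 2\<le>r \<and> mk p q r > 4 \<and> nat (p+q+r) = n
     \<longrightarrow> Good x y z p q r"
proof (induction n rule: less_induct)
  case (less n)
  show ?case
  proof (intro allI impI)
    fix x y z p q r
    assume A: "V x y z \<and> 2\<le>p \<and> 2\<le>q \<and> 2\<le>r \<and> mk p q r > 4 \<and> nat (p+q+r) = n"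
    have IH: "\<And>x' y' z' p' q' r'. V x' y' z' \<Longrightarrow> 2\<le>p' \<Longrightarrow> 2\<le>q' \<Longrightarrow> 2\<le>r' \<Longrightarrow> mk p' q' r' > 4
      \<Longrightarrow> p'+q'+r' < p+q+r \<Longrightarrow> Good x' y' z' p' q' r'"
      using less.IH A by (metis nat_less_eq_zless add_nonneg_nonneg order.trans zero_le_numeral)
    have m: "mk q r p = mk p q r" "mk r p q = mk p q r" unfolding mk_def by (simp_all add: algebra_simps)
    have A2: "2\<le>p" "2\<le>q" "2\<le>r" "4 < mk p q r" using A by auto
    consider "p \<le> r \<and> q \<le> r" | "r \<le> p \<and> q \<le> p" | "p \<le> q \<and> r \<le> q" by linarith
    then show "Good x y z p q r"
    proof cases
      case 1 then show ?thesis using step[OF IH] A by blast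
    next
      case 2
      have V': "V y z x" using A V_rot by blast
      have "Good y z x q r p"
        using A2 2 m by - (rule step[OF IH V'], auto)
      moreover have "tri x y z p q r = tri y z x q r p" using tri_rot A by blast
      ultimately show ?thesis unfolding Good_def by simp
    next
      case 3
      have V': "V y z x" using A V_rot by blast
      have V'': "V z x y" using V' V_rot by blast
      have "Good z x y r p q"
        using A2 3 m by - (rule step[OF IH V''], auto)
      moreover have "tri x y z p q r = tri y z x q r p" using tri_rot A by blast
      moreover have "tri y z x q r p = tri z x y r p q" using tri_rot V' by blast
      ultimately show ?thesis unfolding Good_def by simp
    qed
  qed
qed

lemma mk_closed: assumes "V x y z" "2\<le>p" "2\<le>q" "2\<le>r" "mk p q r = 4" "k \<in> idx3"
  shows "\<exists>x' y' z' p' q' r'. V x' y' z' \<and> 2\<le>p' \<and> 2\<le>q' \<and> 2\<le>r' \<and> mk p' q' r' = 4 \<and>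
          mutate k (tri x y z p q r) = tri x' y' z' p' q' r'"
proof -
  have gen: "\<exists>x' y' z' p' q' r'. V x' y' z' \<and> 2\<le>p' \<and> 2\<le>q' \<and> 2\<le>r' \<and> mk p' q' r' = 4 \<and>
          mutate b (tri a b c u v w) = tri x' y' z' p' q' r'"
    if "V a b c" "2\<le>u" "2\<le>v" "2\<le>w" "mk u v w = 4" for a b c u v w
  proof -
    have "mutate b (tri a b c u v w) = tri a c b (u*v - w) v u" using tri_mut that by auto
    moreover have "V a c b" using that by (auto simp: V_def)
    moreover have "2 \<le> u*v - w" using L1 that by blast
    moreover have "mk (u*v - w) v u = 4" using mk_mut that by simp
    ultimately show ?thesis using that by blast
  qed
  have K: "k = x \<or> k = y \<or> k = z" using assms by (auto simp: V_def idx3_def)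
  have V': "V y z x" using assms V_rot by blast
  have V'': "V z x y" using V' V_rot by blast
  have T1: "tri x y z p q r = tri y z x q r p" using tri_rot assms by blast
  have T2: "tri y z x q r p = tri z x y r p q" using tri_rot V' by blast
  have m: "mk q r p = 4" "mk r p q = 4" using assms unfolding mk_def by (simp_all add: algebra_simps)
  have Y: "k = y \<Longrightarrow> ?thesis" using gen assms by blast
  have Z: "k = z \<Longrightarrow> ?thesis" using gen[of y z x q r p] assms V' T1 m by simp
  have X: "k = x \<Longrightarrow> ?thesis" using gen[of z x y r p q] assms V'' T1 T2 m by simp
  from K X Y Z show ?thesis by blast
qed

theorem mainTheorem14:
  fixes a b :: int
  assumes "a \<ge> b" and "b \<ge> 2"
  shows "mutation_cyclic3 (matA a b) \<longleftrightarrow> a = b"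
proof
  have V: "V 0 1 2" by (simp add: V_def idx3_def)
  assume mc: "mutation_cyclic3 (matA a b)"
  show "a = b"
  proof (rule ccontr)
    assume "a \<noteq> b"
    have e: "mk a b 2 = (a-b)*(a-b) + 4" unfolding mk_def by (simp add: algebra_simps)
    have "(a-b)*(a-b) > 0" using \<open>a \<noteq> b\<close> by (auto simp add: zero_less_mult_iff)
    hence "mk a b 2 > 4" using e by linarith
    hence "Good 0 1 2 a b 2" using descent V assms by auto
    then obtain ks where "set ks \<subseteq> idx3" "\<not> cyclic3 (foldr mutate ks (matA a b))"
      unfolding Good_def matA_tri by blast
    thus False using mc unfolding mutation_cyclic3_def mutation_class3_def by blast
  qed
next
  have V: "V 0 1 2" by (simp add: V_def idx3_def)
  assume "a = b"
  let ?S = "{tri x y z p q r | x y z p q r. V x y z \<and> 2\<le>p \<and> 2\<le>q \<and> 2\<le>r \<and> mk p q r = 4}"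
  have mk4: "mk b b 2 = 4" by (simp add: mk_def algebra_simps)
  have inS: "matA a b \<in> ?S" unfolding matA_tri \<open>a = b\<close>
    using V assms mk4 by blast
  have cl: "foldr mutate ks (matA a b) \<in> ?S" if "set ks \<subseteq> idx3" for ks
    using that
  proof (induction ks)
    case Nil then show ?case using inS by simp
  next
    case (Cons k ks)
    then obtain x y z p q r where "V x y z" "2\<le>p" "2\<le>q" "2\<le>r" "mk p q r = 4"
      "foldr mutate ks (matA a b) = tri x y z p q r" by auto
    then show ?case using mk_closed[of x y z p q r k] Cons.prems by fastforce
  qed
  show "mutation_cyclic3 (matA a b)"
    unfolding mutation_cyclic3_def mutation_class3_def
  proof safe
    fix ks assume "set ks \<subseteq> idx3"
    then obtain x y z p q r where "V x y z" "2\<le>p" "2\<le>q" "2\<le>r"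
      "foldr mutate ks (matA a b) = tri x y z p q r" using cl by blast
    thus "cyclic3 (foldr mutate ks (matA a b))" using tri_cyc by simp
  qed
qed

end
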